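(* Let $a\in\mathbb C$ and $n\ge 0$. Then $\{(x-a)^T : T\in\mathbb P_n\}$ is a $\mathbb C$-basis of $\mathbb C\{x\}_{\le n}$. Moreover, for every $f\in\mathbb C\{x\}_{\le n}$ and every $T\in\mathbb P_n$, the coefficient of $(x-a)^T$ in the expansion of $f$ with respect to this basis is $$\langle f,(x-a)^T\rangle=\sum_{U\in\mathbb P_n}\langle f,x^U\rangle\,(U/T)\,a^{\deg(U)-\deg(T)}.$$
   Context: Let $\mathbb P$ denote the set of finite planar reduced rooted trees (rooted trees in which the children of each vertex are linearly ordered and no vertex has exactly one child), including the empty tree $\mathbf 1$ and the one-vertex tree $|$. For $T\in\mathbb P$, $\deg(T)$ is the number of leaves ($\deg\mathbf 1=0$, $\deg|=1$) and $L(T)$ is its set of leaves; $\mathbb P_n=\{T\in\mathbb P:\deg T\le n\}$. The algebra $\mathbb C\{x\}_{\mathbb P}$ of planar polynomials is the $\mathbb C$-vector space with basis $\{x^T:T\in\mathbb P\}$, $x^{\mathbf 1}=1$, $x^{|}=x$, equipped for each $k\ge2$ with the $k$-linear operation $\omega_k$ given on basis elements by $\omega_k(x^{T_1},\dots,x^{T_k})=x^T$, where $T$ is obtained by attaching the nonempty $T_i$ (in this order) as the subtrees of the children of a new root (if exactly one $T_i$ is nonempty, $T$ is that $T_i$; if all are empty, $T=\mathbf 1$). The product is $f\cdot g=\omega_2(f,g)$. Each $x^T$ arises from $x$ by iterating these operations along the tree $T$; for $y\in\mathbb C\{x\}_{\mathbb P}$, $y^T$ denotes the result of the same iteration starting from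 $y$ (with $y^{\mathbf 1}=1$), in particular $(x-a)^T$ for $a\in\mathbb C$. $\mathbb C\{x\}_{\le n}$ is the span of $\{x^T:T\in\mathbb P_n\}$, and $\langle f,x^U\rangle$ is the coefficient of $x^U$ in $f$. For $S\in\mathbb P$ and $I\subseteq L(S)$, the contraction $S|I\in\mathbb P$ is obtained from the subtree of $S$ consisting of all vertices on paths from the root to leaves in $I$ (with induced planar order) by suppressing every vertex having exactly one child; $S|\emptyset=\mathbf 1$ and $S|I=|$ if $\#I=1$. The planar binomial coefficient is $(S/T)=\#\{I\subseteq L(S): S|I=T\}$ (so it is $0$ unless $\deg T\le \deg S$). *)

theory Defs
  imports Complex_Main
begin

text \<open>Planar rooted trees. PEmp is the empty tree 1, PLf the one-vertex tree |,
  PNd ts a root whose children carry the subtrees ts (in order).\<close>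
datatype ptree = PEmp | PLf | PNd "ptree list"

fun red_ne :: "ptree \<Rightarrow> bool" where
  "red_ne PEmp = False"
| "red_ne PLf = True"
| "red_ne (PNd ts) = (2 \<le> length ts \<and> (\<forall>t\<in>set ts. red_ne t))"

definition PP :: "ptree set" where
  "PP = {T. T = PEmp \<or> red_ne T}"

fun deg :: "ptree \<Rightarrow> nat" where
  "deg PEmp = 0"
| "deg PLf = 1"
| "deg (PNd ts) = sum_list (map deg ts)"

definition Pn :: "nat \<Rightarrow> ptree set" where
  "Pn n = {T \<in> PP. deg T \<le> n}"

text \<open>Leaves, as paths (lists of child indices) from the root.\<close>
function (sequential) leaves :: "ptree \<Rightarrow> nat list set" where
  "leaves PEmp = {}"
| "leaves PLf = {[]}"
| "leaves (PNd ts) = (\<Union>(i, t)\<in>set (zip [0..<length ts] ts). (\<lambda>p. i # p) ` leaves t)"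
  by pat_completeness auto
termination
  by (relation "measure size") (auto dest!: set_zip_rightD simp: le_imp_less_Suc size_list_estimation')

definition graft :: "ptree list \<Rightarrow> ptree" where
  "graft Ts = (let Ns = filter (\<lambda>t. t \<noteq> PEmp) Ts in
     if Ns = [] then PEmp else if length Ns = 1 then hd Ns else PNd Ns)"

function (sequential) contr :: "ptree \<Rightarrow> nat list set \<Rightarrow> ptree" where
  "contr PEmp I = PEmp"
| "contr PLf I = (if [] \<in> I then PLf else PEmp)"
| "contr (PNd ts) I = graft (map (\<lambda>(i, t). contr t {p. i # p \<in> I}) (zip [0..<length ts] ts))"
  by pat_completeness auto
termination
  by (relation "measure (size \<circ> fst)") (auto dest!: set_zip_rightD simp: le_imp_less_Suc size_list_estimation')

definition pbinom :: "ptree \<Rightarrow> ptree \<Rightarrow> nat" where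
  "pbinom S T = card {I. I \<subseteq> leaves S \<and> contr S I = T}"

text \<open>Planar polynomials are represented by their coefficient functions
  (f T = coefficient of x^T), supported on finitely many trees of PP.\<close>
type_synonym ppoly = "ptree \<Rightarrow> complex"

definition psupp :: "ppoly \<Rightarrow> ptree set" where
  "psupp f = {T. f T \<noteq> 0}"

definition mono :: "ptree \<Rightarrow> ppoly" where
  "mono T = (\<lambda>S. if S = T then 1 else 0)"

text \<open>Multilinear extension of omega_k (k = length fs).\<close>
definition omega :: "ppoly list \<Rightarrow> ppoly" where
  "omega fs = (\<lambda>S. \<Sum>Ts\<in>listset (map psupp fs).
      if graft Ts = S then prod_list (map2 (\<lambda>f T. f T) fs Ts) else 0)"

fun ppow :: "ppoly \<Rightarrow> ptree \<Rightarrow> ppoly" where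
  "ppow y PEmp = mono PEmp"
| "ppow y PLf = y"
| "ppow y (PNd ts) = omega (map (ppow y) ts)"

definition xminus :: "complex \<Rightarrow> ppoly" where
  "xminus a = (\<lambda>S. if S = PLf then 1 else if S = PEmp then - a else 0)"

definition Cle :: "nat \<Rightarrow> ppoly set" where
  "Cle n = {f. \<forall>T. f T \<noteq> 0 \<longrightarrow> T \<in> Pn n}"

end

theory Submission
  imports Defs
begin


lemma set_Cons_img: "set_Cons A XS = (\<lambda>(x,xs). x#xs) ` (A \<times> XS)"
  by (auto simp: set_Cons_def)

lemma finite_listset: "\<forall>A\<in>set As. finite A \<Longrightarrow> finite (listset As)"
  by (induction As) (auto simp: set_Cons_img)

fun E :: "ppoly list \<Rightarrow> (ptree list \<Rightarrow> complex) \<Rightarrow> complex" where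
  "E [] g = g []"
| "E (f#fs) g = (\<Sum>x\<in>psupp f. f x * E fs (\<lambda>xs. g (x#xs)))"

lemma E_listset:
  "\<forall>f\<in>set fs. finite (psupp f) \<Longrightarrow>
   (\<Sum>Ts\<in>listset (map psupp fs). g Ts * prod_list (map2 (\<lambda>f T. f T) fs Ts)) = E fs g"
proof (induction fs arbitrary: g)
  case Nil then show ?case by simp
next
  case (Cons f fs)
  have inj: "inj_on (\<lambda>(x,xs). x#xs) (psupp f \<times> listset (map psupp fs))"
    by (auto simp: inj_on_def)
  have "(\<Sum>Ts\<in>listset (map psupp (f#fs)). g Ts * prod_list (map2 (\<lambda>f T. f T) (f#fs) Ts))
     = (\<Sum>z\<in>psupp f \<times> listset (map psupp fs). g (fst z # snd z) * (f (fst z) * prod_list (map2 (\<lambda>f T. f T) fs (snd z))))"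
    unfolding list.map listset.simps set_Cons_img
    by (subst sum.reindex[OF inj]) (simp add: comp_def case_prod_unfold)
  also have "\<dots> = (\<Sum>x\<in>psupp f. \<Sum>xs\<in>listset (map psupp fs). g (x#xs) * (f x * prod_list (map2 (\<lambda>f T. f T) fs xs)))"
    by (simp add: sum.cartesian_product case_prod_unfold)
  also have "\<dots> = (\<Sum>x\<in>psupp f. f x * (\<Sum>xs\<in>listset (map psupp fs). g (x#xs) * prod_list (map2 (\<lambda>f T. f T) fs xs)))"
    by (simp add: sum_distrib_left mult.assoc mult.left_commute)
  also have "\<dots> = E (f#fs) g" using Cons by simp
  finally show ?case .
qed

lemma omega_E: "\<forall>f\<in>set fs. finite (psupp f) \<Longrightarrow>
   omega fs S = E fs (\<lambda>Ts. if graft Ts = S then 1 else 0)"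
proof -
  assume a: "\<forall>f\<in>set fs. finite (psupp f)"
  have "omega fs S = (\<Sum>Ts\<in>listset (map psupp fs). (\<lambda>Ts. if graft Ts = S then 1 else 0) Ts * prod_list (map2 (\<lambda>f T. f T) fs Ts))"
    unfolding omega_def by (rule sum.cong) auto
  then show ?thesis using E_listset[OF a] by simp
qed

lemma psupp_omega: "psupp (omega fs) \<subseteq> graft ` listset (map psupp fs)"
proof
  fix x assume "x \<in> psupp (omega fs)"
  then have "omega fs x \<noteq> 0" by (simp add: psupp_def)
  have "\<exists>Ts. Ts \<in> listset (map psupp fs) \<and> graft Ts = x"
  proof (rule ccontr)
    assume "\<nexists>Ts. Ts \<in> listset (map psupp fs) \<and> graft Ts = x"
    then have "omega fs x = 0" unfolding omega_def by (intro sum.neutral) auto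
    then show False using \<open>omega fs x \<noteq> 0\<close> by simp
  qed
  then show "x \<in> graft ` listset (map psupp fs)" by blast
qed

lemma fin_omega: "\<forall>f\<in>set fs. finite (psupp f) \<Longrightarrow> finite (psupp (omega fs))"
  by (rule finite_subset[OF psupp_omega]) (auto intro!: finite_imageI finite_listset)

lemma psupp_mono[simp]: "psupp (mono T) = {T}"
  by (auto simp: psupp_def mono_def)

lemma fin_ppow: "finite (psupp q) \<Longrightarrow> finite (psupp (ppow q t))"
  by (induction t) (auto intro!: fin_omega)

lemma E_supp: "finite A \<Longrightarrow> psupp f \<subseteq> A \<Longrightarrow>
   E (f#fs) g = (\<Sum>x\<in>A. f x * E fs (\<lambda>xs. g (x#xs)))"
  by (auto intro!: sum.mono_neutral_left simp: psupp_def)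



definition shift :: "nat list \<Rightarrow> nat list" where "shift p = Suc (hd p) # tl p"

lemma shift_Cons[simp]: "shift (i#p) = Suc i # p" by (simp add: shift_def)

lemma leaves_PNd_ne: "p \<in> leaves (PNd ts) \<Longrightarrow> p \<noteq> []" by auto

lemma leaves_Nil[simp]: "leaves (PNd []) = {}" by simp

declare leaves.simps(3)[simp del]
declare contr.simps(3)[simp del]

lemma zip_upt_Cons: "zip [0..<length (t#ts)] (t#ts) = (0,t) # map (\<lambda>(i,s). (Suc i, s)) (zip [0..<length ts] ts)"
proof -
  have "[0..<length (t#ts)] = 0 # map Suc [0..<length ts]"
    by (simp add: map_Suc_upt upt_conv_Cons del: upt_Suc)
  then show ?thesis by (simp add: zip_map1)
qed

lemma lv_Cons: "leaves (PNd (t#ts)) = Cons 0 ` leaves t \<union> shift ` leaves (PNd ts)"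
proof -
  have "leaves (PNd (t#ts)) = Cons 0 ` leaves t \<union>
     (\<Union>(i, s)\<in>set (zip [0..<length ts] ts). (\<lambda>p. Suc i # p) ` leaves s)"
    by (subst leaves.simps, subst zip_upt_Cons) auto
  also have "(\<Union>(i, s)\<in>set (zip [0..<length ts] ts). (\<lambda>p. Suc i # p) ` leaves s) = shift ` leaves (PNd ts)"
    by (auto simp: image_UN image_image leaves.simps)
  finally show ?thesis .
qed

definition cmap :: "ptree list \<Rightarrow> nat list set \<Rightarrow> ptree list" where
  "cmap ts I = map (\<lambda>(i, t). contr t {p. i # p \<in> I}) (zip [0..<length ts] ts)"

lemma contr_PNd: "contr (PNd ts) I = graft (cmap ts I)" by (simp add: cmap_def contr.simps(3))

lemma cmap_Nil[simp]: "cmap [] I = []" by (simp add: cmap_def)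

lemma cmap_Cons: "cmap (t#ts) I = contr t {p. 0#p \<in> I} # cmap ts {p. p \<noteq> [] \<and> shift p \<in> I}"
  unfolding cmap_def by (subst zip_upt_Cons) (auto simp: case_prod_unfold)

definition comb :: "nat list set \<Rightarrow> nat list set \<Rightarrow> nat list set" where
  "comb J1 J2 = Cons 0 ` J1 \<union> shift ` J2"

lemma inj_shift: "inj_on shift {p. p \<noteq> []}"
  by (auto simp: inj_on_def shift_def intro: list.expand)

lemma comb_props:
  assumes "J2 \<subseteq> leaves (PNd ts)"
  shows "{q. 0#q \<in> comb J1 J2} = J1" "{p. p \<noteq> [] \<and> shift p \<in> comb J1 J2} = J2"
proof -
  show "{q. 0#q \<in> comb J1 J2} = J1" by (auto simp: comb_def shift_def)
  show "{p. p \<noteq> [] \<and> shift p \<in> comb J1 J2} = J2"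
  proof (intro equalityI subsetI)
    fix p assume "p \<in> {p. p \<noteq> [] \<and> shift p \<in> comb J1 J2}"
    then have "p \<noteq> []" "shift p \<in> comb J1 J2" by auto
    then obtain q where "q \<in> J2" "shift p = shift q" by (auto simp: comb_def shift_def)
    moreover have "q \<noteq> []" using \<open>q \<in> J2\<close> assms leaves_PNd_ne by blast
    ultimately show "p \<in> J2" using inj_onD[OF inj_shift, of p q] \<open>p \<noteq> []\<close> by auto
  next
    fix p assume "p \<in> J2" then have "p \<noteq> []" using assms leaves_PNd_ne by blast
    then show "p \<in> {p. p \<noteq> [] \<and> shift p \<in> comb J1 J2}" using \<open>p \<in> J2\<close> by (simp add: comb_def)
  qed
qed

lemma comb_sub: "J1 \<subseteq> leaves t \<Longrightarrow> J2 \<subseteq> leaves (PNd ts) \<Longrightarrow> comb J1 J2 \<subseteq> leaves (PNd (t#ts))"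
  by (auto simp: comb_def lv_Cons)

lemma comb_card:
  assumes "finite J1" "finite J2" "J2 \<subseteq> leaves (PNd ts)"
  shows "card (comb J1 J2) = card J1 + card J2"
proof -
  have d: "Cons 0 ` J1 \<inter> shift ` J2 = {}" by (auto simp: shift_def)
  have "J2 \<subseteq> {p. p \<noteq> []}" using assms(3) leaves_PNd_ne by blast
  then have "inj_on shift J2" by (rule inj_on_subset[OF inj_shift])
  moreover have "inj_on (Cons 0) J1" by (simp add: inj_on_def)
  ultimately show ?thesis unfolding comb_def using assms
    by (simp add: card_Un_disjoint[OF _ _ d] card_image)
qed

lemma split_props:
  assumes "I \<subseteq> leaves (PNd (t#ts))"
  shows "comb {q. 0#q \<in> I} {p. p \<noteq> [] \<and> shift p \<in> I} = I"
    "{q. 0#q \<in> I} \<subseteq> leaves t" "{p. p \<noteq> [] \<and> shift p \<in> I} \<subseteq> leaves (PNd ts)"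
proof -
  show "{q. 0#q \<in> I} \<subseteq> leaves t" using assms by (auto simp: lv_Cons shift_def)
  show "{p. p \<noteq> [] \<and> shift p \<in> I} \<subseteq> leaves (PNd ts)"
  proof safe
    fix p assume "p \<noteq> []" "shift p \<in> I"
    then obtain q where "q \<in> leaves (PNd ts)" "shift p = shift q" using assms by (auto simp: lv_Cons shift_def)
    then show "p \<in> leaves (PNd ts)" using inj_onD[OF inj_shift, of p q] \<open>p \<noteq> []\<close> leaves_PNd_ne by auto
  qed
  show "comb {q. 0#q \<in> I} {p. p \<noteq> [] \<and> shift p \<in> I} = I"
  proof
    show "comb {q. 0#q \<in> I} {p. p \<noteq> [] \<and> shift p \<in> I} \<subseteq> I" by (auto simp: comb_def)
    show "I \<subseteq> comb {q. 0#q \<in> I} {p. p \<noteq> [] \<and> shift p \<in> I}"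
    proof
      fix x assume "x \<in> I"
      then have "x \<in> Cons 0 ` leaves t \<union> shift ` leaves (PNd ts)" using assms lv_Cons by auto
      then show "x \<in> comb {q. 0#q \<in> I} {p. p \<noteq> [] \<and> shift p \<in> I}"
        using \<open>x \<in> I\<close> leaves_PNd_ne unfolding comb_def by auto
    qed
  qed
qed

lemma leaves_card: "finite (leaves t) \<and> card (leaves t) = deg t"
proof (induction t)
  case (PNd ts)
  then show ?case
  proof (induction ts)
    case (Cons t ts)
    have h: "finite (leaves t) \<and> card (leaves t) = deg t" using Cons.prems by simp
    have h2: "finite (leaves (PNd ts)) \<and> card (leaves (PNd ts)) = deg (PNd ts)" using Cons by simp
    have "leaves (PNd (t#ts)) = comb (leaves t) (leaves (PNd ts))" by (simp add: lv_Cons comb_def)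
    then show ?case using comb_card[of "leaves t" "leaves (PNd ts)" ts] h h2
      by (simp add: comb_def)
  qed simp
qed auto

lemma PP_iff: "T \<in> PP \<longleftrightarrow> T = PEmp \<or> red_ne T" by (simp add: PP_def)

lemma graft_PP: "\<forall>s\<in>set Ls. s \<in> PP \<Longrightarrow> graft Ls \<in> PP"
proof -
  assume a: "\<forall>s\<in>set Ls. s \<in> PP"
  define Ns where "Ns = filter (\<lambda>t. t \<noteq> PEmp) Ls"
  have r: "\<forall>s\<in>set Ns. red_ne s" using a by (auto simp: Ns_def PP_iff)
  show ?thesis
  proof (cases "Ns = []")
    case False
    show ?thesis
    proof (cases "length Ns = 1")
      case True
      then have "hd Ns \<in> set Ns" using False by simp
      then show ?thesis using r True False by (simp add: graft_def Ns_def[symmetric] PP_iff)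
    next
      case False2: False
      have "length Ns \<noteq> 0" using False by simp
      then have "2 \<le> length Ns" using False2 by linarith
      then show ?thesis using r False False2 by (simp add: graft_def Ns_def[symmetric] PP_iff)
    qed
  qed (simp add: graft_def Ns_def[symmetric] PP_iff)
qed

lemma deg_filter: "sum_list (map deg (filter (\<lambda>t. t \<noteq> PEmp) Ls)) = sum_list (map deg Ls)"
  by (induction Ls) auto

lemma deg_graft: "deg (graft Ls) = sum_list (map deg Ls)"
proof -
  define Ns where "Ns = filter (\<lambda>t. t \<noteq> PEmp) Ls"
  have "deg (graft Ls) = sum_list (map deg Ns)"
  proof (cases "Ns = []")
    case False
    show ?thesis
    proof (cases "length Ns = 1")
      case True
      then obtain x where "Ns = [x]" by (cases Ns) auto
      then show ?thesis by (simp add: graft_def Ns_def[symmetric])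
    qed (use False in \<open>simp add: graft_def Ns_def[symmetric]\<close>)
  qed (simp add: graft_def Ns_def[symmetric])
  then show ?thesis using deg_filter by (simp add: Ns_def)
qed

lemma contr_props: "I \<subseteq> leaves t \<Longrightarrow> deg (contr t I) = card I \<and> contr t I \<in> PP"
proof (induction t arbitrary: I)
  case PEmp then show ?case by (simp add: PP_iff)
next
  case PLf then show ?case by (auto simp: PP_iff subset_singleton_iff)
next
  case (PNd ts)
  have "\<And>I. I \<subseteq> leaves (PNd ts) \<Longrightarrow> sum_list (map deg (cmap ts I)) = card I \<and> (\<forall>s\<in>set (cmap ts I). s \<in> PP)"
    using PNd.IH
  proof (induction ts)
    case Nil then show ?case by simp
  next
    case (Cons t ts)
    define J1 where "J1 = {q. 0#q \<in> I}"
    define J2 where "J2 = {p. p \<noteq> [] \<and> shift p \<in> I}"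
    note sp = split_props[OF Cons.prems(1), folded J1_def J2_def]
    have "card I = card J1 + card J2"
      using comb_card[of J1 J2 ts] sp leaves_card by (metis finite_subset)
    have "\<And>x I. x \<in> set ts \<Longrightarrow> I \<subseteq> leaves x \<Longrightarrow> deg (contr x I) = card I \<and> contr x I \<in> PP"
      using Cons.prems(2) by simp
    note ih = Cons.IH[OF sp(3) this]
    then show ?case using Cons.prems(2)[of t J1] sp \<open>card I = card J1 + card J2\<close>
      by (simp add: cmap_Cons J1_def[symmetric] J2_def[symmetric])
  qed
  then show ?case using PNd.prems by (simp add: contr_PNd deg_graft graft_PP)
qed

lemma contr_all: "T \<in> PP \<Longrightarrow> contr T (leaves T) = T"
proof (induction T)
  case (PNd ts)
  then have r: "2 \<le> length ts" "\<forall>t\<in>set ts. red_ne t" by (auto simp: PP_iff)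
  have "(\<forall>t\<in>set ts. t \<in> PP \<longrightarrow> contr t (leaves t) = t) \<Longrightarrow> (\<forall>t\<in>set ts. red_ne t) \<Longrightarrow> cmap ts (leaves (PNd ts)) = ts"
  proof (induction ts)
    case (Cons t ts)
    have e: "leaves (PNd (t#ts)) = comb (leaves t) (leaves (PNd ts))" by (simp add: lv_Cons comb_def)
    have "{q. 0#q \<in> leaves (PNd (t#ts))} = leaves t" "{p. p \<noteq> [] \<and> shift p \<in> leaves (PNd (t#ts))} = leaves (PNd ts)"
      unfolding e using comb_props[of "leaves (PNd ts)" ts "leaves t"] by auto
    then show ?case using Cons by (simp add: cmap_Cons PP_iff)
  qed simp
  then have "cmap ts (leaves (PNd ts)) = ts" using PNd.IH r by (auto simp: PP_iff)
  moreover have "filter (\<lambda>t. t \<noteq> PEmp) ts = ts" using r(2) by (auto simp: filter_id_conv)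
  ultimately show ?case using r(1) by (auto simp: contr_PNd graft_def)
qed auto



definition gr :: "ptree list \<Rightarrow> ptree" where
  "gr Ns = (if Ns = [] then PEmp else if length Ns = 1 then hd Ns else PNd Ns)"

lemma graft_gr: "graft Ts = gr (filter (\<lambda>t. t \<noteq> PEmp) Ts)"
  by (simp add: graft_def gr_def Let_def)

lemma mono_apply: "mono T S = (if S = T then 1 else 0)" by (simp add: mono_def)

lemma E_filter:
  assumes "finite (psupp p)"
  shows "E (map (ppow p) Ls) (\<lambda>Ts. h (filter (\<lambda>t. t \<noteq> PEmp) Ts))
       = E (map (ppow p) (filter (\<lambda>t. t \<noteq> PEmp) Ls)) (\<lambda>Ts. h (filter (\<lambda>t. t \<noteq> PEmp) Ts))"
proof (induction Ls arbitrary: h)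
  case Nil then show ?case by simp
next
  case (Cons L Ls)
  show ?case
  proof (cases "L = PEmp")
    case True
    then show ?thesis using Cons[of h] by (simp add: mono_apply)
  next
    case False
    have "E (map (ppow p) Ls) (\<lambda>xs. h (filter (\<lambda>t. t \<noteq> PEmp) (x#xs)))
       = E (map (ppow p) (filter (\<lambda>t. t \<noteq> PEmp) Ls)) (\<lambda>xs. h (filter (\<lambda>t. t \<noteq> PEmp) (x#xs)))" for x
    proof -
      have e: "(\<lambda>xs. h (filter (\<lambda>t. t \<noteq> PEmp) (x#xs))) = (\<lambda>Ts. (\<lambda>Ns. h (filter (\<lambda>t. t \<noteq> PEmp) [x] @ Ns)) (filter (\<lambda>t. t \<noteq> PEmp) Ts))"
        by (cases "x = PEmp") auto
      show ?thesis unfolding e by (rule Cons)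
    qed
    then show ?thesis using False by simp
  qed
qed

lemma omega_single:
  assumes "finite (psupp f)"
  shows "omega [f] S = f S"
proof -
  have "omega [f] S = E [f] (\<lambda>Ts. if graft Ts = S then 1 else 0)" using omega_E assms by simp
  also have "\<dots> = (\<Sum>x\<in>insert S (psupp f). f x * (if graft [x] = S then 1 else 0))"
    using E_supp[of "insert S (psupp f)" f "[]" "\<lambda>Ts. if graft Ts = S then 1 else 0"] assms by auto
  also have "\<dots> = (\<Sum>x\<in>insert S (psupp f). if x = S then f x else 0)"
    by (rule sum.cong) (auto simp: graft_def)
  also have "\<dots> = f S" using assms by (simp add: sum.delta)
  finally show ?thesis .
qed

lemma ppow_graft:
  assumes "finite (psupp p)"
  shows "ppow p (graft Ls) = omega (map (ppow p) Ls)"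
proof
  fix S
  define Ns where "Ns = filter (\<lambda>t. t \<noteq> PEmp) Ls"
  have fin: "\<forall>f\<in>set (map (ppow p) Ls). finite (psupp f)" "\<forall>f\<in>set (map (ppow p) Ns). finite (psupp f)"
    using fin_ppow[OF assms] by auto
  have ff: "filter (\<lambda>t. t \<noteq> PEmp) Ns = Ns" by (simp add: Ns_def)
  have "omega (map (ppow p) Ls) S = E (map (ppow p) Ls) (\<lambda>Ts. if gr (filter (\<lambda>t. t \<noteq> PEmp) Ts) = S then 1 else 0)"
    using omega_E[OF fin(1)] by (simp add: graft_gr)
  also have "\<dots> = E (map (ppow p) Ns) (\<lambda>Ts. if gr (filter (\<lambda>t. t \<noteq> PEmp) Ts) = S then 1 else 0)"
    unfolding Ns_def by (rule E_filter[OF assms])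
  also have "\<dots> = omega (map (ppow p) Ns) S"
    using omega_E[OF fin(2)] by (simp add: graft_gr)
  finally have e: "omega (map (ppow p) Ls) S = omega (map (ppow p) Ns) S" .
  have g: "graft Ls = gr Ns" by (simp add: graft_gr Ns_def)
  have "ppow p (gr Ns) S = omega (map (ppow p) Ns) S"
  proof (cases "Ns = []")
    case True
    then show ?thesis by (simp add: gr_def omega_def graft_def mono_def)
  next
    case False
    show ?thesis
    proof (cases "length Ns = 1")
      case True
      then obtain x where "Ns = [x]" by (cases Ns) auto
      then show ?thesis using omega_single[of "ppow p x" S] fin_ppow[OF assms] by (simp add: gr_def)
    next
      case False2: False
      then show ?thesis using False by (simp add: gr_def)
    qed
  qed
  then show "ppow p (graft Ls) S = omega (map (ppow p) Ls) S" using e g by simp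
qed

lemma E_omega_graft:
  assumes "finite (psupp p)"
  shows "ppow p (graft Ls) S = E (map (ppow p) Ls) (\<lambda>Ts. if graft Ts = S then 1 else 0)"
  using ppow_graft[OF assms] omega_E[of "map (ppow p) Ls"] fin_ppow[OF assms] by auto

lemma card_le_deg: "I \<subseteq> leaves t \<Longrightarrow> card I \<le> deg t"
  using leaves_card[of t] card_mono by metis

lemma forest:
  assumes fp: "finite (psupp p)"
    and y: "y = (\<lambda>S. p S + b * mono PEmp S)"
    and M: "\<forall>t\<in>set ts. \<forall>S. ppow y t S = (\<Sum>I\<in>Pow (leaves t). b^(deg t - card I) * ppow p (contr t I) S)"
  shows "E (map (ppow y) ts) g = (\<Sum>I\<in>Pow (leaves (PNd ts)). b^(deg (PNd ts) - card I) * E (map (ppow p) (cmap ts I)) g)"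
  using M
proof (induction ts arbitrary: g)
  case Nil then show ?case by simp
next
  case (Cons t ts)
  have fy: "finite (psupp y)"
    by (rule finite_subset[of _ "psupp p \<union> {PEmp}"]) (use fp in \<open>auto simp: y psupp_def mono_def\<close>)
  define F where "F J1 = ppow p (contr t J1)" for J1
  define H where "H J2 x = E (map (ppow p) (cmap ts J2)) (\<lambda>xs. g (x#xs))" for J2 x
  define A where "A = psupp (ppow y t) \<union> (\<Union>J1\<in>Pow (leaves t). psupp (F J1))"
  define L1 where "L1 = Pow (leaves t)"
  define L2 where "L2 = Pow (leaves (PNd ts))"
  have finL: "finite L1" "finite L2" using leaves_card by (auto simp: L1_def L2_def)
  have finA: "finite A" unfolding A_def F_def L1_def[symmetric]
    using fin_ppow[OF fy] fin_ppow[OF fp] finL by auto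
  have Mt: "\<And>x. ppow y t x = (\<Sum>J1\<in>L1. b^(deg t - card J1) * F J1 x)"
    using Cons.prems by (simp add: F_def L1_def)
  have IH: "\<And>x. E (map (ppow y) ts) (\<lambda>xs. g (x#xs)) = (\<Sum>J2\<in>L2. b^(deg (PNd ts) - card J2) * H J2 x)"
    using Cons.IH Cons.prems by (simp add: H_def L2_def)
  have "E (map (ppow y) (t#ts)) g = (\<Sum>x\<in>A. ppow y t x * E (map (ppow y) ts) (\<lambda>xs. g (x#xs)))"
    by (simp only: list.map, rule E_supp[OF finA]) (auto simp: A_def)
  also have "\<dots> = (\<Sum>x\<in>A. (\<Sum>J1\<in>L1. b^(deg t - card J1) * F J1 x) * (\<Sum>J2\<in>L2. b^(deg (PNd ts) - card J2) * H J2 x))"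
    by (simp add: Mt IH)
  also have "\<dots> = (\<Sum>x\<in>A. \<Sum>J1\<in>L1. \<Sum>J2\<in>L2. (b^(deg t - card J1) * b^(deg (PNd ts) - card J2)) * (F J1 x * H J2 x))"
    by (simp add: sum_product mult_ac)
  also have "\<dots> = (\<Sum>J1\<in>L1. \<Sum>J2\<in>L2. (b^(deg t - card J1) * b^(deg (PNd ts) - card J2)) * (\<Sum>x\<in>A. F J1 x * H J2 x))"
    by (simp add: sum.swap[of _ A] sum_distrib_left)
  also have "\<dots> = (\<Sum>J1\<in>L1. \<Sum>J2\<in>L2. (b^(deg t - card J1) * b^(deg (PNd ts) - card J2)) * E (F J1 # map (ppow p) (cmap ts J2)) g)"
  proof (intro sum.cong refl)
    fix J1 J2 assume "J1 \<in> L1"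
    then have "psupp (F J1) \<subseteq> A" by (auto simp: A_def L1_def)
    then show "(b^(deg t - card J1) * b^(deg (PNd ts) - card J2)) * (\<Sum>x\<in>A. F J1 x * H J2 x)
      = (b^(deg t - card J1) * b^(deg (PNd ts) - card J2)) * E (F J1 # map (ppow p) (cmap ts J2)) g"
      using E_supp[OF finA] by (simp add: H_def)
  qed
  also have "\<dots> = (\<Sum>z\<in>L1 \<times> L2. (b^(deg t - card (fst z)) * b^(deg (PNd ts) - card (snd z))) * E (F (fst z) # map (ppow p) (cmap ts (snd z))) g)"
    by (simp add: sum.cartesian_product case_prod_unfold)
  also have "\<dots> = (\<Sum>I\<in>Pow (leaves (PNd (t#ts))). b^(deg (PNd (t#ts)) - card I) * E (map (ppow p) (cmap (t#ts) I)) g)"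
  proof (rule sum.reindex_bij_witness[where j = "\<lambda>z. comb (fst z) (snd z)"
        and i = "\<lambda>I. ({q. 0#q \<in> I}, {p. p \<noteq> [] \<and> shift p \<in> I})"])
    fix z assume z: "z \<in> L1 \<times> L2"
    then have s: "fst z \<subseteq> leaves t" "snd z \<subseteq> leaves (PNd ts)" by (auto simp: L1_def L2_def)
    show "({q. 0#q \<in> comb (fst z) (snd z)}, {p. p \<noteq> [] \<and> shift p \<in> comb (fst z) (snd z)}) = z"
      using comb_props[OF s(2)] by (simp add: prod_eq_iff)
    show "comb (fst z) (snd z) \<in> Pow (leaves (PNd (t#ts)))" using comb_sub[OF s] by simp
    have c: "card (comb (fst z) (snd z)) = card (fst z) + card (snd z)"
      using comb_card[OF _ _ s(2)] s leaves_card by (metis finite_subset)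
    have l: "card (fst z) \<le> deg t" "card (snd z) \<le> deg (PNd ts)" using card_le_deg[OF s(1)] card_le_deg[OF s(2)] by auto
    have dd: "deg (PNd (t#ts)) = deg t + deg (PNd ts)" by simp
    have "deg (PNd (t#ts)) - card (comb (fst z) (snd z)) = (deg t - card (fst z)) + (deg (PNd ts) - card (snd z))"
      using c l dd by linarith
    then show "b ^ (deg (PNd (t#ts)) - card (comb (fst z) (snd z))) * E (map (ppow p) (cmap (t#ts) (comb (fst z) (snd z)))) g
       = (b^(deg t - card (fst z)) * b^(deg (PNd ts) - card (snd z))) * E (F (fst z) # map (ppow p) (cmap ts (snd z))) g"
      using comb_props[OF s(2)] by (simp add: power_add cmap_Cons F_def)
  next
    fix I assume I: "I \<in> Pow (leaves (PNd (t#ts)))"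
    then have I': "I \<subseteq> leaves (PNd (t#ts))" by simp
    show "comb (fst ({q. 0#q \<in> I}, {p. p \<noteq> [] \<and> shift p \<in> I})) (snd ({q. 0#q \<in> I}, {p. p \<noteq> [] \<and> shift p \<in> I})) = I"
      using split_props[OF I'] by simp
    show "({q. 0#q \<in> I}, {p. p \<noteq> [] \<and> shift p \<in> I}) \<in> L1 \<times> L2"
      using split_props[OF I'] by (simp add: L1_def L2_def)
  qed
  finally show ?case .
qed

lemma main:
  assumes fp: "finite (psupp p)"
  shows "ppow (\<lambda>S. p S + b * mono PEmp S) t S = (\<Sum>I\<in>Pow (leaves t). b^(deg t - card I) * ppow p (contr t I) S)"
proof (induction t arbitrary: S)
  case PEmp then show ?case by simp
next
  case PLf
  have "Pow {[]::nat list} = {{}, {[]}}" by auto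
  then show ?case by (simp add: mono_def)
next
  case (PNd ts)
  define y where "y = (\<lambda>S. p S + b * mono PEmp S)"
  have fy: "finite (psupp y)"
    by (rule finite_subset[of _ "psupp p \<union> {PEmp}"]) (use fp in \<open>auto simp: y_def psupp_def mono_def\<close>)
  have "ppow y (PNd ts) S = E (map (ppow y) ts) (\<lambda>Ts. if graft Ts = S then 1 else 0)"
    using omega_E[of "map (ppow y) ts"] fin_ppow[OF fy] by auto
  also have "\<dots> = (\<Sum>I\<in>Pow (leaves (PNd ts)). b^(deg (PNd ts) - card I) * E (map (ppow p) (cmap ts I)) (\<lambda>Ts. if graft Ts = S then 1 else 0))"
    by (rule forest[OF fp y_def]) (use PNd.IH in \<open>simp add: y_def\<close>)
  also have "\<dots> = (\<Sum>I\<in>Pow (leaves (PNd ts)). b^(deg (PNd ts) - card I) * ppow p (contr (PNd ts) I) S)"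
    by (simp add: contr_PNd E_omega_graft[OF fp])
  finally show ?case by (simp add: y_def)
qed



lemma E_mono: "E (map mono Us) g = g Us"
  by (induction Us arbitrary: g) (auto simp: mono_apply)

lemma graft_red: "2 \<le> length ts \<Longrightarrow> \<forall>t\<in>set ts. red_ne t \<Longrightarrow> graft ts = PNd ts"
proof -
  assume a: "2 \<le> length ts" "\<forall>t\<in>set ts. red_ne t"
  then have "filter (\<lambda>t. t \<noteq> PEmp) ts = ts" by (auto simp: filter_id_conv)
  then show ?thesis using a(1) by (auto simp: graft_def)
qed

lemma ppow_x: "T \<in> PP \<Longrightarrow> ppow (mono PLf) T = mono T"
proof (induction T)
  case (PNd ts)
  then have r: "2 \<le> length ts" "\<forall>t\<in>set ts. red_ne t" by (auto simp: PP_iff)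
  then have "map (ppow (mono PLf)) ts = map mono ts" using PNd.IH by (auto simp: PP_iff)
  then have "ppow (mono PLf) (PNd ts) = omega (map mono ts)" unfolding ppow.simps by (rule arg_cong[where f=omega])
  also have "\<dots> = mono (PNd ts)"
  proof
    fix S
    show "omega (map mono ts) S = mono (PNd ts) S"
      using omega_E[of "map mono ts" S] E_mono graft_red[OF r] by (auto simp: mono_apply)
  qed
  finally show ?case .
qed (auto simp: mono_def)

lemma sum_list_ge_length: "\<forall>t\<in>set ts. 1 \<le> deg t \<Longrightarrow> length ts \<le> sum_list (map deg ts)"
  by (induction ts) auto

lemma red_deg: "red_ne T \<Longrightarrow> 1 \<le> deg T"
proof (induction T)
  case (PNd ts)
  then have "length ts \<le> sum_list (map deg ts)" by (intro sum_list_ge_length) auto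
  then show ?case using PNd.prems by simp
qed auto

lemma child_deg:
  assumes "t \<in> set ts" "2 \<le> length ts" "\<forall>s\<in>set ts. 1 \<le> deg s"
  shows "deg t + 1 \<le> sum_list (map deg ts)"
proof -
  have e: "sum_list (map deg ts) = deg t + sum_list (map deg (remove1 t ts))"
    using assms(1) by (rule sum_list_map_remove1)
  have "length (remove1 t ts) \<ge> 1" using assms(1,2) by (simp add: length_remove1)
  moreover have "\<forall>s\<in>set (remove1 t ts). 1 \<le> deg s" using assms(3) by (meson notin_set_remove1)
  ultimately have "1 \<le> sum_list (map deg (remove1 t ts))" using sum_list_ge_length by fastforce
  then show ?thesis using e by simp
qed

lemma finite_Pn: "finite (Pn n)"
proof (induction n)
  case 0
  have "Pn 0 \<subseteq> {PEmp}" using red_deg by (fastforce simp: Pn_def PP_iff)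
  then show ?case using finite_subset by blast
next
  case (Suc n)
  have "Pn (Suc n) \<subseteq> {PEmp, PLf} \<union> PNd ` {ts. set ts \<subseteq> Pn n \<and> length ts \<le> Suc n}"
  proof
    fix T assume T: "T \<in> Pn (Suc n)"
    show "T \<in> {PEmp, PLf} \<union> PNd ` {ts. set ts \<subseteq> Pn n \<and> length ts \<le> Suc n}"
    proof (cases T)
      case (PNd ts)
      then have r: "2 \<le> length ts" "\<forall>t\<in>set ts. red_ne t" "sum_list (map deg ts) \<le> Suc n"
        using T by (auto simp: Pn_def PP_iff)
      have d1: "\<forall>s\<in>set ts. 1 \<le> deg s" using r(2) red_deg by blast
      have "set ts \<subseteq> Pn n"
      proof
        fix t assume "t \<in> set ts"
        then have "deg t + 1 \<le> Suc n" using child_deg[OF _ r(1) d1] r(3) by fastforce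
        then show "t \<in> Pn n" using r(2) \<open>t \<in> set ts\<close> by (auto simp: Pn_def PP_iff)
      qed
      moreover have "length ts \<le> Suc n" using sum_list_ge_length[OF d1] r(3) by linarith
      ultimately show ?thesis using PNd by blast
    qed auto
  qed
  moreover have "finite {ts. set ts \<subseteq> Pn n \<and> length ts \<le> Suc n}"
    using finite_lists_length_le[OF Suc.IH] by blast
  ultimately show ?case using finite_subset by blast
qed

lemma xminus_eq: "xminus a = (\<lambda>S. mono PLf S + (- a) * mono PEmp S)"
  by (auto simp: xminus_def mono_apply)

lemma x_eq: "mono PLf = (\<lambda>S. xminus a S + a * mono PEmp S)"
  by (auto simp: xminus_def mono_apply)

lemma fin_mono: "finite (psupp (mono T))" by simp

lemma fin_xminus: "finite (psupp (xminus a))"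
  by (rule finite_subset[of _ "{PEmp, PLf}"]) (auto simp: psupp_def xminus_def)

lemma Mform: "T \<in> PP \<Longrightarrow> ppow (xminus a) T S = (\<Sum>I\<in>Pow (leaves T). (- a)^(deg T - card I) * mono (contr T I) S)"
  unfolding xminus_eq
  by (subst main[OF fin_mono]) (auto intro!: sum.cong simp: ppow_x contr_props)

lemma full_I: "T \<in> PP \<Longrightarrow> I \<subseteq> leaves T \<Longrightarrow> deg T \<le> card I \<Longrightarrow> I = leaves T"
  using leaves_card[of T] card_subset_eq[of "leaves T" I] card_mono[of "leaves T" I] by fastforce

lemma Msupp: "T \<in> PP \<Longrightarrow> ppow (xminus a) T S \<noteq> 0 \<Longrightarrow> S \<in> PP \<and> deg S \<le> deg T"
proof -
  assume T: "T \<in> PP" and nz: "ppow (xminus a) T S \<noteq> 0"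
  have "\<exists>I\<in>Pow (leaves T). contr T I = S"
  proof (rule ccontr)
    assume "\<not> ?thesis"
    then have "ppow (xminus a) T S = 0" unfolding Mform[OF T] by (intro sum.neutral) (auto simp: mono_apply)
    then show False using nz by simp
  qed
  then obtain I where "I \<subseteq> leaves T" "contr T I = S" by auto
  then show ?thesis using contr_props[of I T] card_le_deg[of I T] by auto
qed

lemma Mtop: "T \<in> PP \<Longrightarrow> S \<noteq> T \<Longrightarrow> deg T \<le> deg S \<Longrightarrow> ppow (xminus a) T S = 0"
  unfolding Mform
proof (intro sum.neutral ballI)
  fix I assume T: "T \<in> PP" "S \<noteq> T" "deg T \<le> deg S" and I: "I \<in> Pow (leaves T)"
  show "(- a) ^ (deg T - card I) * mono (contr T I) S = 0"
  proof (cases "contr T I = S")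
    case True
    then have "deg T \<le> card I" using contr_props[of I T] I T by auto
    then have "I = leaves T" using full_I T I by auto
    then show ?thesis using True contr_all T by auto
  qed (auto simp: mono_apply)
qed

lemma Mdiag: "T \<in> PP \<Longrightarrow> ppow (xminus a) T T = 1"
proof -
  assume T: "T \<in> PP"
  have "ppow (xminus a) T T = (\<Sum>I\<in>Pow (leaves T). if I = leaves T then 1 else 0)"
    unfolding Mform[OF T]
  proof (intro sum.cong refl)
    fix I assume I: "I \<in> Pow (leaves T)"
    show "(- a) ^ (deg T - card I) * mono (contr T I) T = (if I = leaves T then 1 else 0)"
    proof (cases "contr T I = T")
      case True
      then have "deg T \<le> card I" using contr_props[of I T] I by auto
      then have "I = leaves T" using full_I T I by auto
      then show ?thesis using True leaves_card[of T] by (simp add: mono_apply)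
    next
      case False
      then have "I \<noteq> leaves T" using contr_all T by auto
      then show ?thesis using False by (simp add: mono_apply)
    qed
  qed
  also have "\<dots> = 1" using leaves_card[of T] by (simp add: sum.delta')
  finally show ?thesis .
qed



lemma expand_mono:
  assumes U: "U \<in> Pn n"
  shows "mono U S = (\<Sum>T\<in>Pn n. of_nat (pbinom U T) * a^(deg U - deg T) * ppow (xminus a) T S)"
proof -
  have UP: "U \<in> PP" and Ud: "deg U \<le> n" using U by (auto simp: Pn_def)
  define L where "L = Pow (leaves U)"
  have finL: "finite L" using leaves_card by (simp add: L_def)
  define \<phi> where "\<phi> T = a^(deg U - deg T) * ppow (xminus a) T S" for T
  have cP: "\<And>I. I \<in> L \<Longrightarrow> contr U I \<in> Pn n \<and> deg (contr U I) = card I"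
  proof -
    fix I assume "I \<in> L"
    then have "I \<subseteq> leaves U" by (simp add: L_def)
    then show "contr U I \<in> Pn n \<and> deg (contr U I) = card I"
      using contr_props[of I U] card_le_deg[of I U] Ud by (simp add: Pn_def)
  qed
  have "mono U S = ppow (mono PLf) U S" using ppow_x[OF UP] by simp
  also have "\<dots> = ppow (\<lambda>S. xminus a S + a * mono PEmp S) U S" by (simp only: x_eq[of a])
  also have "\<dots> = (\<Sum>I\<in>L. a^(deg U - card I) * ppow (xminus a) (contr U I) S)"
    by (simp add: main[OF fin_xminus] L_def)
  also have "\<dots> = (\<Sum>I\<in>L. \<phi> (contr U I))"
    by (rule sum.cong) (auto simp: \<phi>_def cP)
  also have "\<dots> = (\<Sum>I\<in>L. \<Sum>T\<in>Pn n. if contr U I = T then \<phi> T else 0)"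
    by (rule sum.cong) (auto simp: sum.delta finite_Pn cP)
  also have "\<dots> = (\<Sum>T\<in>Pn n. \<Sum>I\<in>L. if contr U I = T then \<phi> T else 0)"
    by (rule sum.swap)
  also have "\<dots> = (\<Sum>T\<in>Pn n. of_nat (pbinom U T) * \<phi> T)"
  proof (rule sum.cong[OF refl])
    fix T
    have "(\<Sum>I\<in>L. if contr U I = T then \<phi> T else 0) = (\<Sum>I\<in>{I\<in>L. contr U I = T}. \<phi> T)"
      by (rule sum.inter_filter[OF finL, symmetric])
    also have "\<dots> = of_nat (card {I\<in>L. contr U I = T}) * \<phi> T" by simp
    also have "{I\<in>L. contr U I = T} = {I. I \<subseteq> leaves U \<and> contr U I = T}" by (auto simp: L_def)
    finally show "(\<Sum>I\<in>L. if contr U I = T then \<phi> T else 0) = of_nat (pbinom U T) * \<phi> T"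
      by (simp add: pbinom_def)
  qed
  finally show ?thesis by (simp add: \<phi>_def mult.assoc)
qed

theorem proposition2p1:
  fixes a :: complex and n :: nat
  shows "(\<forall>T\<in>Pn n. ppow (xminus a) T \<in> Cle n)
    \<and> (\<forall>c :: ptree \<Rightarrow> complex.
          (\<forall>S. (\<Sum>T\<in>Pn n. c T * ppow (xminus a) T S) = 0) \<longrightarrow> (\<forall>T\<in>Pn n. c T = 0))
    \<and> (\<forall>f\<in>Cle n. \<forall>S. f S =
          (\<Sum>T\<in>Pn n. (\<Sum>U\<in>Pn n. f U * of_nat (pbinom U T) * a ^ (deg U - deg T))
                       * ppow (xminus a) T S))"
proof (intro conjI allI impI ballI)
  fix T assume T: "T \<in> Pn n"
  show "ppow (xminus a) T \<in> Cle n"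
    unfolding Cle_def
  proof (intro CollectI allI impI)
    fix S assume "ppow (xminus a) T S \<noteq> 0"
    then show "S \<in> Pn n" using Msupp[of T a S] T by (simp add: Pn_def)
  qed
next
  fix c :: "ptree \<Rightarrow> complex" and T
  assume h: "\<forall>S. (\<Sum>T\<in>Pn n. c T * ppow (xminus a) T S) = 0" and T: "T \<in> Pn n"
  show "c T = 0"
  proof (rule ccontr)
    assume "c T \<noteq> 0"
    define D where "D = {T\<in>Pn n. c T \<noteq> 0}"
    have finD: "finite D" using finite_Pn by (simp add: D_def)
    have "T \<in> D" using T \<open>c T \<noteq> 0\<close> by (simp add: D_def)
    then have ne: "deg ` D \<noteq> {}" by auto
    obtain T0 where T0: "T0 \<in> D" "deg T0 = Max (deg ` D)" using Max_in[OF finite_imageI[OF finD] ne] by auto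
    have mx: "\<And>T. T \<in> D \<Longrightarrow> deg T \<le> deg T0" using T0 finD by simp
    have T0P: "T0 \<in> PP" using T0 by (simp add: D_def Pn_def)
    have "(\<Sum>T\<in>Pn n. c T * ppow (xminus a) T T0) = (\<Sum>T\<in>Pn n. if T = T0 then c T else 0)"
    proof (rule sum.cong[OF refl])
      fix T assume T: "T \<in> Pn n"
      show "c T * ppow (xminus a) T T0 = (if T = T0 then c T else 0)"
      proof (cases "T = T0")
        case True then show ?thesis using Mdiag[OF T0P] by simp
      next
        case False
        show ?thesis
        proof (cases "c T = 0")
          case False2: False
          then have "T \<in> D" using T by (simp add: D_def)
          then have "ppow (xminus a) T T0 = 0" using Mtop[of T T0 a] mx False T by (auto simp: Pn_def)
          then show ?thesis using False by simp
        qed (use False in simp)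
      qed
    qed
    also have "\<dots> = c T0" using T0 finite_Pn by (simp add: sum.delta' D_def)
    finally show False using h T0 by (simp add: D_def)
  qed
next
  fix f S assume f: "f \<in> Cle n"
  have "f S = (\<Sum>U\<in>Pn n. if U = S then f U else 0)"
    using f finite_Pn by (auto simp: sum.delta' Cle_def)
  also have "\<dots> = (\<Sum>U\<in>Pn n. f U * mono U S)"
    by (rule sum.cong) (auto simp: mono_apply)
  also have "\<dots> = (\<Sum>U\<in>Pn n. f U * (\<Sum>T\<in>Pn n. of_nat (pbinom U T) * a^(deg U - deg T) * ppow (xminus a) T S))"
    by (rule sum.cong[OF refl]) (simp add: expand_mono)
  also have "\<dots> = (\<Sum>U\<in>Pn n. \<Sum>T\<in>Pn n. f U * of_nat (pbinom U T) * a^(deg U - deg T) * ppow (xminus a) T S)"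
    by (simp add: sum_distrib_left mult.assoc)
  also have "\<dots> = (\<Sum>T\<in>Pn n. \<Sum>U\<in>Pn n. f U * of_nat (pbinom U T) * a^(deg U - deg T) * ppow (xminus a) T S)"
    by (rule sum.swap)
  also have "\<dots> = (\<Sum>T\<in>Pn n. (\<Sum>U\<in>Pn n. f U * of_nat (pbinom U T) * a ^ (deg U - deg T)) * ppow (xminus a) T S)"
    by (simp add: sum_distrib_right)
  finally show "f S = (\<Sum>T\<in>Pn n. (\<Sum>U\<in>Pn n. f U * of_nat (pbinom U T) * a ^ (deg U - deg T)) * ppow (xminus a) T S)" .
qed

end
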